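(* Let $m,n\ge1$ with $m+n\ge3$ and $s>1$. Let $P\in\mathbb{R}^{2m\times 2n}$ be the block matrix $P=\begin{bmatrix} s\mathbf{1} & \mathbf{1}\\ \mathbf{1} & s\mathbf{1}\end{bmatrix}$ with $m\times n$ blocks, where $\mathbf{1}$ is the all-ones matrix. For non-negative $Q\in\mathbb{R}^{2m\times 2n}$ with no zero row or column, let $J(Q)=\|Q-P\|_F^2 - \lambda(\sigma_1(B(Q))+\sigma_2(B(Q)))$, where $\lambda>0$ and $B(Q)$ is the DTM of the joint pmf $Q/(\mathbf{1}^TQ\mathbf{1})$. Let $Q_1=\begin{bmatrix} s\mathbf{1} & \mathbf{0}\\ \mathbf{0} & s\mathbf{1}\end{bmatrix}$ (with $m\times n$ blocks) and let $Q_2$ be obtained from $P$ by setting to $0$ all entries of the last row and of the last column except the $(2m,2n)$ entry, which equals $s$. Then $J(Q_1)=2mn-2\lambda$ and $J(Q_2)=m+n+s^2(m+n-2)-2\lambda$. Consequently, if $s<\sqrt{(2mn-m-n)/(m+n-2)}$, then $J(Q_2)<J(Q_1)$, so $Q_1$ is not a global minimizer of $J$ over non-negative matrices.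
   Context: For a joint pmf $P_{Y,X}$ (viewed as a matrix) with strictly positive marginals $P_Y$ (row sums) and $P_X$ (column sums), the divergence transition matrix is $B(P_{Y,X})=[P_Y]^{-1/2}P_{Y,X}[P_X]^{-1/2}$, where $[P]$ is the diagonal matrix with $P$ on its diagonal; its singular values are $\sigma_1\ge\sigma_2\ge\cdots$ and $\sigma_1=1$. $\|\cdot\|_F$ is the Frobenius norm. *)

theory Defs
  imports "Jordan_Normal_Form.Char_Poly" "HOL-Computational_Algebra.Polynomial"
begin

definition diag_of :: "nat \<Rightarrow> (nat \<Rightarrow> real) \<Rightarrow> real mat" where
  "diag_of k p = mat k k (\<lambda>(i,j). if i = j then p i else 0)"

definition row_sums :: "real mat \<Rightarrow> nat \<Rightarrow> real" where
  "row_sums A i = (\<Sum>j<dim_col A. A $$ (i,j))"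

definition col_sums :: "real mat \<Rightarrow> nat \<Rightarrow> real" where
  "col_sums A j = (\<Sum>i<dim_row A. A $$ (i,j))"

definition dtm :: "real mat \<Rightarrow> real mat" where
  "dtm P = diag_of (dim_row P) (\<lambda>i. 1 / sqrt (row_sums P i)) * P
           * diag_of (dim_col P) (\<lambda>j. 1 / sqrt (col_sums P j))"

(* singular values in non-increasing order: square roots of the eigenvalues
   (with multiplicity) of B^T B; sing_val B k is sigma_k (1-based) *)
definition sing_vals :: "real mat \<Rightarrow> real list" where
  "sing_vals B = rev (sorted_list_of_multiset
      (image_mset sqrt (proots (char_poly (transpose_mat B * B)))))"

definition sing_val :: "real mat \<Rightarrow> nat \<Rightarrow> real" where
  "sing_val B k = sing_vals B ! (k - 1)"

definition frob_norm :: "real mat \<Rightarrow> real" where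
  "frob_norm A = sqrt (\<Sum>i<dim_row A. \<Sum>j<dim_col A. (A $$ (i,j))^2)"

definition total_sum :: "real mat \<Rightarrow> real" where
  "total_sum A = (\<Sum>i<dim_row A. \<Sum>j<dim_col A. A $$ (i,j))"

definition J_obj :: "real mat \<Rightarrow> real \<Rightarrow> real mat \<Rightarrow> real" where
  "J_obj P lam Q = (frob_norm (Q - P))^2
     - lam * (sing_val (dtm ((1 / total_sum Q) \<cdot>\<^sub>m Q)) 1
              + sing_val (dtm ((1 / total_sum Q) \<cdot>\<^sub>m Q)) 2)"

definition admissible :: "nat \<Rightarrow> nat \<Rightarrow> real mat \<Rightarrow> bool" where
  "admissible k l Q \<longleftrightarrow> Q \<in> carrier_mat k l
     \<and> (\<forall>i<k. \<forall>j<l. Q $$ (i,j) \<ge> 0)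
     \<and> (\<forall>i<k. \<exists>j<l. Q $$ (i,j) \<noteq> 0)
     \<and> (\<forall>j<l. \<exists>i<k. Q $$ (i,j) \<noteq> 0)"

(* P = [s1 1; 1 s1] with m x n blocks (0-based indices) *)
definition P_mat :: "nat \<Rightarrow> nat \<Rightarrow> real \<Rightarrow> real mat" where
  "P_mat m n s = mat (2*m) (2*n) (\<lambda>(i,j). if (i < m) = (j < n) then s else 1)"

definition Q1_mat :: "nat \<Rightarrow> nat \<Rightarrow> real \<Rightarrow> real mat" where
  "Q1_mat m n s = mat (2*m) (2*n) (\<lambda>(i,j). if (i < m) = (j < n) then s else 0)"

definition Q2_mat :: "nat \<Rightarrow> nat \<Rightarrow> real \<Rightarrow> real mat" where
  "Q2_mat m n s = mat (2*m) (2*n) (\<lambda>(i,j).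
     if i = 2*m - 1 \<and> j = 2*n - 1 then s
     else if i = 2*m - 1 \<or> j = 2*n - 1 then 0
     else if (i < m) = (j < n) then s else 1)"

end

theory Submission imports Defs begin

lemma ifm: "(if P then a else 0) * (c::real) = (if P then a * c else 0)" "(c::real) * (if P then a else 0) = (if P then c * a else 0)" by auto

lemma diag_left:
  assumes "A \<in> carrier_mat k l" "i < k" "j < l"
  shows "(diag_of k d * A) $$ (i,j) = d i * A $$ (i,j)"
  using assms by (simp add: diag_of_def scalar_prod_def row_def col_def ifm sum.delta)

lemma diag_right:
  assumes "A \<in> carrier_mat k l" "i < k" "j < l"
  shows "(A * diag_of l d) $$ (i,j) = A $$ (i,j) * d j"
  using assms by (simp add: diag_of_def scalar_prod_def row_def col_def ifm sum.delta')

lemma dtm_carrier: "P \<in> carrier_mat k l \<Longrightarrow> dtm P \<in> carrier_mat k l"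
  unfolding dtm_def diag_of_def by auto

lemma dtm_index:
  assumes "P \<in> carrier_mat k l" "i < k" "j < l"
  shows "dtm P $$ (i,j) = P $$ (i,j) / (sqrt (row_sums P i) * sqrt (col_sums P j))"
proof -
  have c: "diag_of k (\<lambda>i. 1 / sqrt (row_sums P i)) * P \<in> carrier_mat k l"
    using assms unfolding diag_of_def by auto
  show ?thesis using assms unfolding dtm_def
    by (simp add: diag_right[OF c] diag_left)
qed

lemma wcs:
  fixes w z :: "nat \<Rightarrow> real"
  assumes "finite A" "\<And>j. j \<in> A \<Longrightarrow> w j \<ge> 0"
  shows "(\<Sum>j\<in>A. w j * z j)^2 \<le> (\<Sum>j\<in>A. w j) * (\<Sum>j\<in>A. w j * (z j)^2)"
proof -
  have "0 \<le> (\<Sum>j\<in>A. \<Sum>k\<in>A. w j * w k * (z j - z k)^2)"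
    using assms by (intro sum_nonneg) auto
  also have "\<dots> = (\<Sum>j\<in>A. \<Sum>k\<in>A. w j * (z j)^2 * w k) + (\<Sum>j\<in>A. \<Sum>k\<in>A. w j * (w k * (z k)^2))
       - 2 * (\<Sum>j\<in>A. \<Sum>k\<in>A. (w j * z j) * (w k * z k))"
    by (simp add: power2_eq_square algebra_simps sum.distrib sum_subtractf sum_distrib_left)
  also have "\<dots> = 2*((\<Sum>j\<in>A. w j) * (\<Sum>j\<in>A. w j * (z j)^2)) - 2*(\<Sum>j\<in>A. w j * z j)^2"
    by (simp add: power2_eq_square sum_distrib_left[symmetric] sum_distrib_right[symmetric])
  finally show ?thesis by simp
qed

lemma sort_top2:
  fixes S :: "real multiset"
  assumes "\<forall>x\<in>#S. x \<le> 1"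
  shows "rev (sorted_list_of_multiset (S + {#1,1#})) ! 0 = 1 \<and> rev (sorted_list_of_multiset (S + {#1,1#})) ! 1 = 1"
proof -
  define ys where "ys = sorted_list_of_multiset S @ [1,1]"
  have "sorted ys" unfolding ys_def using assms by (auto simp: sorted_append)
  moreover have "mset ys = S + {#1,1#}" unfolding ys_def by simp
  ultimately have "sorted_list_of_multiset (S + {#1,1#}) = ys"
    by (metis sorted_list_of_multiset_mset sorted_sort_id)
  thus ?thesis unfolding ys_def by (simp add: nth_append)
qed

lemma char_poly_block_diag:
  fixes A D :: "real mat"
  assumes A: "A \<in> carrier_mat a a" and D: "D \<in> carrier_mat b b"
  shows "char_poly (four_block_mat A (0\<^sub>m a b) (0\<^sub>m b a) D) = char_poly A * char_poly D"
proof -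
  let ?cm = "\<lambda> A. [:0, 1:] \<cdot>\<^sub>m 1\<^sub>m (dim_row A) + map_mat (\<lambda>x. [:- x:]) A"
  have "char_poly (four_block_mat A (0\<^sub>m a b) (0\<^sub>m b a) D) = det (?cm (four_block_mat A (0\<^sub>m a b) (0\<^sub>m b a) D))"
    unfolding char_poly_defs by simp
  also have "?cm (four_block_mat A (0\<^sub>m a b) (0\<^sub>m b a) D) = four_block_mat (?cm A) (0\<^sub>m a b) (0\<^sub>m b a) (?cm D)"
    by (rule eq_matI, insert A D, auto)
  also have "det \<dots> = det (?cm A) * det (?cm D)"
    by (rule det_four_block_mat_lower_left_zero[of _ a _ b], insert A D, auto)
  also have "\<dots> = char_poly A * char_poly D" unfolding char_poly_defs ..
  finally show ?thesis .
qed


lemma block_order2: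
  fixes M :: "real mat"
  assumes M: "M \<in> carrier_mat l l" and a: "0 < a" "a < l"
    and Mz: "\<And>i j. i < l \<Longrightarrow> j < l \<Longrightarrow> (i < a) \<noteq> (j < a) \<Longrightarrow> M $$ (i,j) = 0"
    and u: "u \<in> carrier_vec l" and Mu: "M *\<^sub>v u = u" and unz: "\<And>j. j < l \<Longrightarrow> u $ j \<noteq> 0"
  shows "order 1 (char_poly M) \<ge> 2"
proof -
  define A where "A = mat a a (\<lambda>(i,j). M $$ (i,j))"
  define D where "D = mat (l-a) (l-a) (\<lambda>(i,j). M $$ (i+a,j+a))"
  have Ac: "A \<in> carrier_mat a a" and Dc: "D \<in> carrier_mat (l-a) (l-a)" unfolding A_def D_def by auto
  have Meq: "M = four_block_mat A (0\<^sub>m a (l-a)) (0\<^sub>m (l-a) a) D"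
  proof (rule eq_matI)
    fix i j assume i: "i < dim_row (four_block_mat A (0\<^sub>m a (l-a)) (0\<^sub>m (l-a) a) D)"
      and j: "j < dim_col (four_block_mat A (0\<^sub>m a (l-a)) (0\<^sub>m (l-a) a) D)"
    hence il: "i < l" and jl: "j < l" using Ac Dc a by auto
    show "M $$ (i,j) = four_block_mat A (0\<^sub>m a (l-a)) (0\<^sub>m (l-a) a) D $$ (i,j)"
      using Mz[OF il jl] il jl Ac Dc a
      by (cases "i < a"; cases "j < a") (auto simp: A_def D_def  le_add_diff_inverse)
  qed (use M Ac Dc a in auto)
  have Mu_i: "(\<Sum>j<l. M $$ (i,j) * u $ j) = u $ i" if "i < l" for i
  proof -
    have "(M *\<^sub>v u) $ i = u $ i" using Mu by simp
    thus ?thesis using M u that by (simp add: mult_mat_vec_def scalar_prod_def atLeast0LessThan)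
  qed
  have split: "(\<Sum>j<l. f j) = (\<Sum>j<a. f j) + (\<Sum>j<l-a. f (j+a))" for f :: "nat \<Rightarrow> real"
  proof -
    have la: "l - a + a = l" using a by simp
    have e1: "sum f {0..<a} + sum f {a..<l} = sum f {0..<l}"
      by (rule sum.atLeastLessThan_concat) (use a in auto)
    have e2: "sum f {a..<l} = sum (\<lambda>j. f (j+a)) {0..<l-a}"
      using sum.shift_bounds_nat_ivl[of f 0 a "l-a", unfolded add_0_left la] .
    show ?thesis unfolding lessThan_atLeast0 using e1 e2 by simp
  qed
  have evA: "eigenvalue A 1"
    unfolding eigenvalue_def eigenvector_def
  proof (intro exI[of _ "vec a (\<lambda>j. u $ j)"] conjI)
    show "vec a (\<lambda>j. u $ j) \<noteq> 0\<^sub>v (dim_row A)"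
      using unz[of 0] a Ac by (metis carrier_matD(1) index_vec index_zero_vec(1) order.strict_trans)
    show "A *\<^sub>v vec a (($) u) = 1 \<cdot>\<^sub>v vec a (($) u)"
    proof (rule eq_vecI)
      fix i assume "i < dim_vec (1 \<cdot>\<^sub>v vec a (($) u))"
      hence i: "i < a" by simp
      have "(A *\<^sub>v vec a (($) u)) $ i = (\<Sum>j<a. M $$ (i,j) * u $ j)"
        using i by (simp add: A_def mult_mat_vec_def scalar_prod_def atLeast0LessThan)
      also have "\<dots> = (\<Sum>j<l. M $$ (i,j) * u $ j)"
      proof -
        have "(\<Sum>j<l-a. M $$ (i,j+a) * u $ (j+a)) = 0"
        proof (intro sum.neutral ballI)
          fix x assume "x \<in> {..<l-a}"
          thus "M $$ (i,x+a) * u $ (x+a) = 0" using Mz[of i "x+a"] i a by auto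
        qed
        thus ?thesis using split[of "\<lambda>j. M $$ (i,j) * u $ j"] by simp
      qed
      also have "\<dots> = u $ i" using Mu_i i a by simp
      finally show "(A *\<^sub>v vec a (($) u)) $ i = (1 \<cdot>\<^sub>v vec a (($) u)) $ i" using i by simp
    qed (simp add: A_def)
  qed (simp add: A_def)
  have evD: "eigenvalue D 1"
    unfolding eigenvalue_def eigenvector_def
  proof (intro exI[of _ "vec (l-a) (\<lambda>j. u $ (j+a))"] conjI)
    show "vec (l-a) (\<lambda>j. u $ (j+a)) \<noteq> 0\<^sub>v (dim_row D)"
    proof
      assume "vec (l-a) (\<lambda>j. u $ (j+a)) = 0\<^sub>v (dim_row D)"
      hence "vec (l-a) (\<lambda>j. u $ (j+a)) $ 0 = 0\<^sub>v (dim_row D) $ 0" by simp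
      thus False using unz[of a] a Dc by simp
    qed
    show "D *\<^sub>v vec (l-a) (\<lambda>j. u $ (j+a)) = 1 \<cdot>\<^sub>v vec (l-a) (\<lambda>j. u $ (j+a))"
    proof (rule eq_vecI)
      fix i assume "i < dim_vec (1 \<cdot>\<^sub>v vec (l-a) (\<lambda>j. u $ (j+a)))"
      hence i: "i < l - a" by simp
      have "(D *\<^sub>v vec (l-a) (\<lambda>j. u $ (j+a))) $ i = (\<Sum>j<l-a. M $$ (i+a,j+a) * u $ (j+a))"
        using i by (simp add: D_def mult_mat_vec_def scalar_prod_def atLeast0LessThan)
      also have "\<dots> = (\<Sum>j<l. M $$ (i+a,j) * u $ j)"
      proof -
        have "(\<Sum>j<a. M $$ (i+a,j) * u $ j) = 0"
        proof (intro sum.neutral ballI)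
          fix x assume "x \<in> {..<a}"
          thus "M $$ (i+a,x) * u $ x = 0" using Mz[of "i+a" x] i a by auto
        qed
        thus ?thesis using split[of "\<lambda>j. M $$ (i+a,j) * u $ j"] by simp
      qed
      also have "\<dots> = u $ (i+a)" using Mu_i i a by simp
      finally show "(D *\<^sub>v vec (l-a) (\<lambda>j. u $ (j+a))) $ i = (1 \<cdot>\<^sub>v vec (l-a) (\<lambda>j. u $ (j+a))) $ i" using i by simp
    qed (simp add: D_def)
  qed (simp add: D_def)
  have rA: "poly (char_poly A) 1 = 0" using evA eigenvalue_root_char_poly[OF Ac] by simp
  have rD: "poly (char_poly D) 1 = 0" using evD eigenvalue_root_char_poly[OF Dc] by simp
  have nA: "char_poly A \<noteq> 0" using degree_monic_char_poly[OF Ac] by auto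
  have nD: "char_poly D \<noteq> 0" using degree_monic_char_poly[OF Dc] by auto
  have cp: "char_poly M = char_poly A * char_poly D"
    unfolding Meq by (rule char_poly_block_diag[OF Ac Dc])
  have "order 1 (char_poly M) = order 1 (char_poly A) + order 1 (char_poly D)"
    unfolding cp by (rule order_mult) (use nA nD in simp)
  moreover have "order 1 (char_poly A) \<ge> 1" using order_gt_0_iff[OF nA, of 1] rA by (simp add: Suc_le_eq)
  moreover have "order 1 (char_poly D) \<ge> 1" using order_gt_0_iff[OF nD, of 1] rD by (simp add: Suc_le_eq)
  ultimately show ?thesis by simp
qed

context
  fixes P :: "real mat" and k l :: nat
  assumes Pc: "P \<in> carrier_mat k l"
    and Pnn: "\<And>i j. i < k \<Longrightarrow> j < l \<Longrightarrow> P $$ (i,j) \<ge> 0"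
    and rpos: "\<And>i. i < k \<Longrightarrow> row_sums P i > 0"
    and cpos: "\<And>j. j < l \<Longrightarrow> col_sums P j > 0"
begin

lemma rs: "i < k \<Longrightarrow> (\<Sum>j<l. P $$ (i,j)) = row_sums P i"
  using Pc by (simp add: row_sums_def)
lemma cs: "j < l \<Longrightarrow> (\<Sum>i<k. P $$ (i,j)) = col_sums P j"
  using Pc by (simp add: col_sums_def)

lemma B_u: "dtm P *\<^sub>v vec l (\<lambda>j. sqrt (col_sums P j)) = vec k (\<lambda>i. sqrt (row_sums P i))"
proof (rule eq_vecI)
  fix i assume "i < dim_vec (vec k (\<lambda>i. sqrt (row_sums P i)))"
  hence i: "i < k" by simp
  have "(dtm P *\<^sub>v vec l (\<lambda>j. sqrt (col_sums P j))) $ i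
      = (\<Sum>j<l. P $$ (i,j) / (sqrt (row_sums P i) * sqrt (col_sums P j)) * sqrt (col_sums P j))"
    using i dtm_carrier[OF Pc] dtm_index[OF Pc i]
    by (simp add: mult_mat_vec_def scalar_prod_def atLeast0LessThan)
  also have "\<dots> = (\<Sum>j<l. P $$ (i,j)) / sqrt (row_sums P i)"
    unfolding sum_divide_distrib by (rule sum.cong, simp, insert cpos, fastforce)
  also have "\<dots> = sqrt (row_sums P i)" unfolding rs[OF i] using rpos[OF i]
    by (metis less_eq_real_def real_div_sqrt)
  finally show "(dtm P *\<^sub>v vec l (\<lambda>j. sqrt (col_sums P j))) $ i = vec k (\<lambda>i. sqrt (row_sums P i)) $ i"
    using i by simp
qed (insert dtm_carrier[OF Pc], auto)

lemma Bt_u: "transpose_mat (dtm P) *\<^sub>v vec k (\<lambda>i. sqrt (row_sums P i)) = vec l (\<lambda>j. sqrt (col_sums P j))"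
proof (rule eq_vecI)
  fix j assume "j < dim_vec (vec l (\<lambda>j. sqrt (col_sums P j)))"
  hence j: "j < l" by simp
  have "(transpose_mat (dtm P) *\<^sub>v vec k (\<lambda>i. sqrt (row_sums P i))) $ j
      = (\<Sum>i<k. P $$ (i,j) / (sqrt (row_sums P i) * sqrt (col_sums P j)) * sqrt (row_sums P i))"
    using j dtm_carrier[OF Pc] dtm_index[OF Pc _ j]
    by (simp add: mult_mat_vec_def scalar_prod_def atLeast0LessThan)
  also have "\<dots> = (\<Sum>i<k. P $$ (i,j)) / sqrt (col_sums P j)"
    unfolding sum_divide_distrib by (rule sum.cong, simp, insert rpos, fastforce)
  also have "\<dots> = sqrt (col_sums P j)" unfolding cs[OF j] using cpos[OF j]
    by (metis less_eq_real_def real_div_sqrt)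
  finally show "(transpose_mat (dtm P) *\<^sub>v vec k (\<lambda>i. sqrt (row_sums P i))) $ j = vec l (\<lambda>j. sqrt (col_sums P j)) $ j"
    using j by simp
qed (insert dtm_carrier[OF Pc], auto)

lemma M_u: "(transpose_mat (dtm P) * dtm P) *\<^sub>v vec l (\<lambda>j. sqrt (col_sums P j)) = vec l (\<lambda>j. sqrt (col_sums P j))"
  using dtm_carrier[OF Pc] by (simp add: B_u Bt_u)

lemma B_bound:
  assumes v: "v \<in> carrier_vec l"
  shows "(dtm P *\<^sub>v v) \<bullet> (dtm P *\<^sub>v v) \<le> v \<bullet> v"
proof -
  have Bv: "(dtm P *\<^sub>v v) $ i = (\<Sum>j<l. P $$ (i,j) * (v $ j / sqrt (col_sums P j))) / sqrt (row_sums P i)" if i: "i < k" for i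
    using i v dtm_carrier[OF Pc] dtm_index[OF Pc i]
    by (simp add: mult_mat_vec_def scalar_prod_def atLeast0LessThan sum_divide_distrib mult.commute)
  have sq: "((dtm P *\<^sub>v v) $ i)^2 \<le> (\<Sum>j<l. P $$ (i,j) * (v $ j)^2 / col_sums P j)" if i: "i < k" for i
  proof -
    have "((dtm P *\<^sub>v v) $ i)^2 = (\<Sum>j<l. P $$ (i,j) * (v $ j / sqrt (col_sums P j)))^2 / row_sums P i"
      unfolding Bv[OF i] using rpos[OF i] by (simp add: power_divide)
    also have "\<dots> \<le> (row_sums P i * (\<Sum>j<l. P $$ (i,j) * (v $ j / sqrt (col_sums P j))^2)) / row_sums P i"
      using wcs[of "{..<l}" "\<lambda>j. P $$ (i,j)" "\<lambda>j. v $ j / sqrt (col_sums P j)"] Pnn[OF i] rpos[OF i]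
      unfolding rs[OF i] by (intro divide_right_mono) auto
    also have "\<dots> = (\<Sum>j<l. P $$ (i,j) * (v $ j)^2 / col_sums P j)"
      using rpos[OF i] cpos by (auto simp: power_divide less_imp_le intro!: sum.cong)
    finally show ?thesis .
  qed
  have "(dtm P *\<^sub>v v) \<bullet> (dtm P *\<^sub>v v) = (\<Sum>i<k. ((dtm P *\<^sub>v v) $ i)^2)"
    using dtm_carrier[OF Pc] by (simp add: scalar_prod_def atLeast0LessThan power2_eq_square)
  also have "\<dots> \<le> (\<Sum>i<k. \<Sum>j<l. P $$ (i,j) * (v $ j)^2 / col_sums P j)"
    by (rule sum_mono) (rule sq, simp)
  also have "\<dots> = (\<Sum>j<l. (\<Sum>i<k. P $$ (i,j)) * (v $ j)^2 / col_sums P j)"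
    by (subst sum.swap) (simp add: sum_distrib_right sum_divide_distrib)
  also have "\<dots> = (\<Sum>j<l. (v $ j)^2)"
    using cpos by (intro sum.cong) (auto simp: cs dual_order.strict_implies_not_eq)
  also have "\<dots> = v \<bullet> v" using v by (simp add: scalar_prod_def atLeast0LessThan power2_eq_square)
  finally show ?thesis .
qed

lemma M_carrier: "transpose_mat (dtm P) * dtm P \<in> carrier_mat l l"
  using dtm_carrier[OF Pc] by auto

lemma roots_le1:
  assumes "poly (char_poly (transpose_mat (dtm P) * dtm P)) x = 0"
  shows "x \<le> 1"
proof -
  have Bc: "dtm P \<in> carrier_mat k l" by (rule dtm_carrier[OF Pc])
  have "eigenvalue (transpose_mat (dtm P) * dtm P) x"
    using eigenvalue_root_char_poly[OF M_carrier] assms by simp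
  then obtain v where v: "v \<in> carrier_vec l" "v \<noteq> 0\<^sub>v l"
    and ev: "(transpose_mat (dtm P) * dtm P) *\<^sub>v v = x \<cdot>\<^sub>v v"
    unfolding eigenvalue_def eigenvector_def using M_carrier by auto
  have wc: "dtm P *\<^sub>v v \<in> carrier_vec k" using Bc v(1) by (rule mult_mat_vec_carrier)
  have "x * (v \<bullet> v) = v \<bullet> ((transpose_mat (dtm P) * dtm P) *\<^sub>v v)"
    using ev v by simp
  also have "\<dots> = v \<bullet> (transpose_mat (dtm P) *\<^sub>v (dtm P *\<^sub>v v))"
    using Bc v by (subst assoc_mult_mat_vec[of _ l k _ l]) auto
  also have "\<dots> = (transpose_mat (dtm P) *\<^sub>v (dtm P *\<^sub>v v)) \<bullet> v"
    by (rule comm_scalar_prod[of _ l], insert v Bc, auto)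
  also have "\<dots> = (dtm P *\<^sub>v v) \<bullet> (dtm P *\<^sub>v v)"
    by (rule transpose_vec_mult_scalar[OF Bc v(1) wc])
  also have "\<dots> \<le> v \<bullet> v" by (rule B_bound[OF v(1)])
  finally have le: "x * (v \<bullet> v) \<le> v \<bullet> v" .
  have vv: "v \<bullet> v = (\<Sum>i<l. (v $ i)^2)" using v by (simp add: scalar_prod_def atLeast0LessThan power2_eq_square)
  obtain i where i: "i < l" "v $ i \<noteq> 0" using v by (metis carrier_vecD eq_vecI index_zero_vec)
  have "(v $ i)^2 \<le> (\<Sum>i<l. (v $ i)^2)"
    by (rule member_le_sum) (use i in auto)
  moreover have "(v $ i)^2 > 0" using i by simp
  ultimately have "v \<bullet> v > 0" unfolding vv by linarith
  thus ?thesis using le by (metis mult_le_cancel_right2 less_le_not_le)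
qed

lemma M_index:
  assumes "j < l" "j' < l"
  shows "(transpose_mat (dtm P) * dtm P) $$ (j,j') = (\<Sum>i<k. dtm P $$ (i,j) * dtm P $$ (i,j'))"
  using assms dtm_carrier[OF Pc] by (simp add: scalar_prod_def atLeast0LessThan)

lemma sv12:
  assumes a: "0 < a" "a < l"
    and pat: "\<And>i j. i < k \<Longrightarrow> j < l \<Longrightarrow> P $$ (i,j) \<noteq> 0 \<Longrightarrow> (i < p) = (j < a)"
  shows "sing_val (dtm P) 1 = 1 \<and> sing_val (dtm P) 2 = 1"
proof -
  let ?M = "transpose_mat (dtm P) * dtm P"
  have Mz: "?M $$ (j,j') = 0" if jl: "j < l" "j' < l" and ne: "(j < a) \<noteq> (j' < a)" for j j'
  proof -
    have "dtm P $$ (i,j) * dtm P $$ (i,j') = 0" if i: "i < k" for i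
    proof (cases "P $$ (i,j) = 0")
      case True thus ?thesis using dtm_index[OF Pc i \<open>j < l\<close>] by simp
    next
      case False
      hence "P $$ (i,j') = 0" using pat[OF i \<open>j < l\<close>] pat[OF i \<open>j' < l\<close>] ne by auto
      thus ?thesis using dtm_index[OF Pc i \<open>j' < l\<close>] by simp
    qed
    thus ?thesis unfolding M_index[OF jl] by (intro sum.neutral) auto
  qed
  have uc: "vec l (\<lambda>j. sqrt (col_sums P j)) \<in> carrier_vec l" by simp
  have unz: "vec l (\<lambda>j. sqrt (col_sums P j)) $ j \<noteq> 0" if "j < l" for j
    using cpos[OF that] that by simp
  have ord: "order 1 (char_poly ?M) \<ge> 2"
    by (rule block_order2[OF M_carrier a Mz uc M_u unz])
  have pnz: "char_poly ?M \<noteq> 0" using degree_monic_char_poly[OF M_carrier] by auto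
  define R where "R = proots (char_poly ?M)"
  have cR: "count R 1 \<ge> 2" unfolding R_def using ord pnz by simp
  have leR: "\<forall>x\<in>#R. x \<le> 1" unfolding R_def using pnz roots_le1 by auto
  define R' where "R' = R - {#1,1#}"
  have RR: "R = R' + {#1,1#}"
    by (rule multiset_eqI) (use cR in \<open>auto simp: R'_def\<close>)
  have le': "\<forall>y\<in>#image_mset sqrt R'. y \<le> 1"
    using leR unfolding RR by auto
  have "image_mset sqrt R = image_mset sqrt R' + {#1,1#}" unfolding RR by simp
  hence "sing_vals (dtm P) = rev (sorted_list_of_multiset (image_mset sqrt R' + {#1,1#}))"
    unfolding sing_vals_def R_def by simp
  thus ?thesis unfolding sing_val_def using sort_top2[OF le'] by simp
qed

end

lemma adm_pos:
  assumes "admissible k l Q"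
  shows "\<forall>i<k. row_sums Q i > 0" "\<forall>j<l. col_sums Q j > 0"
proof -
  have Qc: "Q \<in> carrier_mat k l" and nn: "\<And>i j. i < k \<Longrightarrow> j < l \<Longrightarrow> Q $$ (i,j) \<ge> 0"
    and r: "\<forall>i<k. \<exists>j<l. Q $$ (i,j) \<noteq> 0" and c: "\<forall>j<l. \<exists>i<k. Q $$ (i,j) \<noteq> 0"
    using assms unfolding admissible_def by auto
  show "\<forall>i<k. row_sums Q i > 0"
  proof (intro allI impI)
    fix i assume i: "i < k"
    then obtain j where j: "j < l" "Q $$ (i,j) \<noteq> 0" using r by auto
    have "0 < (\<Sum>j<l. Q $$ (i,j))"
      by (rule sum_pos2[of _ j]) (use j i nn[OF i j(1)] nn[OF i] in \<open>auto simp: order_le_less\<close>)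
    thus "row_sums Q i > 0" using Qc by (simp add: row_sums_def)
  qed
  show "\<forall>j<l. col_sums Q j > 0"
  proof (intro allI impI)
    fix j assume j: "j < l"
    then obtain i where i: "i < k" "Q $$ (i,j) \<noteq> 0" using c by auto
    have "0 < (\<Sum>i<k. Q $$ (i,j))"
      by (rule sum_pos2[of _ i]) (use j i nn[OF i(1) j] nn[OF _ j] in \<open>auto simp: order_le_less\<close>)
    thus "col_sums Q j > 0" using Qc by (simp add: col_sums_def)
  qed
qed

lemma sv_adm:
  assumes adm: "admissible k l Q" and k: "0 < k" and a: "0 < a" "a < l"
    and pat: "\<And>i j. i < k \<Longrightarrow> j < l \<Longrightarrow> Q $$ (i,j) \<noteq> 0 \<Longrightarrow> (i < p) = (j < a)"
  shows "sing_val (dtm ((1 / total_sum Q) \<cdot>\<^sub>m Q)) 1 = 1 \<and> sing_val (dtm ((1 / total_sum Q) \<cdot>\<^sub>m Q)) 2 = 1"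
proof -
  have Qc: "Q \<in> carrier_mat k l" and nn: "\<And>i j. i < k \<Longrightarrow> j < l \<Longrightarrow> Q $$ (i,j) \<ge> 0"
    using adm unfolding admissible_def by auto
  note rp = adm_pos(1)[OF adm] and cp = adm_pos(2)[OF adm]
  have T: "total_sum Q = (\<Sum>i<k. row_sums Q i)" using Qc by (simp add: total_sum_def row_sums_def)
  have Tpos: "total_sum Q > 0" unfolding T
    by (rule sum_pos2[of _ 0]) (use k rp in \<open>auto simp: order_le_less\<close>)
  define P where "P = (1 / total_sum Q) \<cdot>\<^sub>m Q"
  have Pc: "P \<in> carrier_mat k l" using Qc by (simp add: P_def)
  have Pi: "P $$ (i,j) = Q $$ (i,j) / total_sum Q" if "i < k" "j < l" for i j
    using that Qc by (simp add: P_def)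
  have "sing_val (dtm P) 1 = 1 \<and> sing_val (dtm P) 2 = 1"
  proof (rule sv12[OF Pc _ _ _ a])
    show "P $$ (i,j) \<ge> 0" if "i < k" "j < l" for i j using Pi[OF that] nn[OF that] Tpos by simp
    show "row_sums P i > 0" if "i < k" for i
    proof -
      have "row_sums P i = row_sums Q i / total_sum Q"
        using Pc Qc that by (simp add: row_sums_def Pi sum_divide_distrib)
      thus ?thesis using rp that Tpos by simp
    qed
    show "col_sums P j > 0" if "j < l" for j
    proof -
      have "col_sums P j = col_sums Q j / total_sum Q"
        using Pc Qc that by (simp add: col_sums_def Pi sum_divide_distrib)
      thus ?thesis using cp that Tpos by simp
    qed
    show "(i < p) = (j < a)" if "i < k" "j < l" "P $$ (i,j) \<noteq> 0" for i j
      using pat[OF that(1,2)] that Pi[OF that(1,2)] by auto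
  qed
  thus ?thesis unfolding P_def .
qed

lemma J_simp:
  assumes "sing_val (dtm ((1 / total_sum Q) \<cdot>\<^sub>m Q)) 1 = 1 \<and> sing_val (dtm ((1 / total_sum Q) \<cdot>\<^sub>m Q)) 2 = 1"
  shows "J_obj P lam Q = (\<Sum>i<dim_row (Q - P). \<Sum>j<dim_col (Q - P). ((Q - P) $$ (i,j))^2) - 2 * lam"
  using assms unfolding J_obj_def frob_norm_def by (simp add: sum_nonneg)

lemma cnt:
  assumes "a \<le> N"
  shows "(\<Sum>i<N. if i < a then x else y) = real a * x + real (N - a) * (y::real)"
proof -
  have e1: "sum f {0..<a} + sum f {a..<N} = sum f {0..<N}" for f :: "nat \<Rightarrow> real"
    by (rule sum.atLeastLessThan_concat) (use assms in auto)
  have "(\<Sum>i<N. if i < a then x else y) = (\<Sum>i\<in>{0..<a}. if i < a then x else y) + (\<Sum>i\<in>{a..<N}. if i < a then x else y)"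
    unfolding lessThan_atLeast0 e1 ..
  also have "\<dots> = (\<Sum>i\<in>{0..<a}. x) + (\<Sum>i\<in>{a..<N}. y)"
    by (intro arg_cong2[where f="(+)"] sum.cong) auto
  finally show ?thesis by simp
qed

lemma Q1_adm: assumes "m \<ge> 1" "n \<ge> 1" "s > 1" shows "admissible (2*m) (2*n) (Q1_mat m n s)"
  unfolding admissible_def
proof (intro conjI allI impI)
  show "Q1_mat m n s \<in> carrier_mat (2*m) (2*n)" by (simp add: Q1_mat_def)
  show "Q1_mat m n s $$ (i,j) \<ge> 0" if "i < 2*m" "j < 2*n" for i j using that assms by (simp add: Q1_mat_def)
  show "\<exists>j<2*n. Q1_mat m n s $$ (i,j) \<noteq> 0" if "i < 2*m" for i
    using that assms by (intro exI[of _ "if i < m then 0 else n"]) (auto simp: Q1_mat_def)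
  show "\<exists>i<2*m. Q1_mat m n s $$ (i,j) \<noteq> 0" if "j < 2*n" for j
    using that assms by (intro exI[of _ "if j < n then 0 else m"]) (auto simp: Q1_mat_def)
qed

lemma Q2_adm: assumes "m \<ge> 1" "n \<ge> 1" "s > 1" shows "admissible (2*m) (2*n) (Q2_mat m n s)"
  unfolding admissible_def
proof (intro conjI allI impI)
  show "Q2_mat m n s \<in> carrier_mat (2*m) (2*n)" by (simp add: Q2_mat_def)
  show "Q2_mat m n s $$ (i,j) \<ge> 0" if "i < 2*m" "j < 2*n" for i j using that assms by (simp add: Q2_mat_def)
  show "\<exists>j<2*n. Q2_mat m n s $$ (i,j) \<noteq> 0" if "i < 2*m" for i
    using that assms by (intro exI[of _ "if i = 2*m-1 then 2*n-1 else 0"]) (auto simp: Q2_mat_def)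
  show "\<exists>i<2*m. Q2_mat m n s $$ (i,j) \<noteq> 0" if "j < 2*n" for j
    using that assms by (intro exI[of _ "if j = 2*n-1 then 2*m-1 else 0"]) (auto simp: Q2_mat_def)
qed

lemma J1:
  assumes "m \<ge> 1" "n \<ge> 1" "s > 1"
  shows "J_obj (P_mat m n s) lam (Q1_mat m n s) = 2 * real m * real n - 2 * lam"
proof -
  have sv: "sing_val (dtm ((1 / total_sum (Q1_mat m n s)) \<cdot>\<^sub>m (Q1_mat m n s))) 1 = 1 \<and>
            sing_val (dtm ((1 / total_sum (Q1_mat m n s)) \<cdot>\<^sub>m (Q1_mat m n s))) 2 = 1"
    by (rule sv_adm[OF Q1_adm[OF assms], of n m]) (use assms in \<open>auto simp: Q1_mat_def split: if_splits\<close>)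
  have e: "((Q1_mat m n s - P_mat m n s) $$ (i,j))^2 = (if j < n then (if i<m then 0 else 1) else (if i<m then 1 else 0))"
    if "i < 2*m" "j < 2*n" for i j using that by (simp add: Q1_mat_def P_mat_def)
  have "(\<Sum>i<2*m. \<Sum>j<2*n. ((Q1_mat m n s - P_mat m n s) $$ (i,j))^2) = (\<Sum>i<2*m. real n)"
  proof (rule sum.cong[OF refl])
    fix i assume "i \<in> {..<2*m}"
    hence i: "i < 2*m" by simp
    have "(\<Sum>j<2*n. ((Q1_mat m n s - P_mat m n s) $$ (i,j))^2)
        = (\<Sum>j<2*n. (if j < n then (if i<m then 0 else 1) else (if i<m then 1 else 0)))"
      using e[OF i] by (intro sum.cong) auto
    also have "\<dots> = real n" by (subst cnt) auto
    finally show "(\<Sum>j<2*n. ((Q1_mat m n s - P_mat m n s) $$ (i,j))^2) = real n" .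
  qed
  also have "\<dots> = 2 * real m * real n" by simp
  finally show ?thesis using J_simp[OF sv] by (simp add: P_mat_def)
qed

lemma J2:
  assumes "m \<ge> 1" "n \<ge> 1" "s > 1"
  shows "J_obj (P_mat m n s) lam (Q2_mat m n s) = real m + real n + s^2 * (real m + real n - 2) - 2 * lam"
proof -
  have sv: "sing_val (dtm ((1 / total_sum (Q2_mat m n s)) \<cdot>\<^sub>m (Q2_mat m n s))) 1 = 1 \<and>
            sing_val (dtm ((1 / total_sum (Q2_mat m n s)) \<cdot>\<^sub>m (Q2_mat m n s))) 2 = 1"
    by (rule sv_adm[OF Q2_adm[OF assms], of "2*n-1" "2*m-1"]) (use assms in \<open>auto simp: Q2_mat_def split: if_splits\<close>)
  define g where "g i = (if i < m then 1 else s^2)" for i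
  define h where "h j = (if j < n then 1 else s^2)" for j
  have e: "((Q2_mat m n s - P_mat m n s) $$ (i,j))^2 =
     (if i = 2*m-1 \<and> j = 2*n-1 then 0 else if i = 2*m-1 then h j else if j = 2*n-1 then g i else 0)"
    if "i < 2*m" "j < 2*n" for i j using that assms by (auto simp: Q2_mat_def P_mat_def g_def h_def)
  have Sn: "2*n = Suc (2*n-1)" and Sm: "2*m = Suc (2*m-1)" using assms by auto
  have hs: "(\<Sum>j<2*n-1. h j) = real n + real (n-1) * s^2"
    unfolding h_def using assms by (subst cnt) (auto simp: algebra_simps)
  have gs: "(\<Sum>i<2*m-1. g i) = real m + real (m-1) * s^2"
    unfolding g_def using assms by (subst cnt) (auto simp: algebra_simps)
  have row: "(\<Sum>j<2*n. ((Q2_mat m n s - P_mat m n s) $$ (i,j))^2)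
      = (if i = 2*m-1 then real n + real (n-1) * s^2 else g i)" if i: "i < 2*m" for i
  proof -
    have "(\<Sum>j<2*n. ((Q2_mat m n s - P_mat m n s) $$ (i,j))^2)
      = (\<Sum>j<2*n. (if i = 2*m-1 \<and> j = 2*n-1 then 0 else if i = 2*m-1 then h j else if j = 2*n-1 then g i else 0))"
      using e[OF i] by (intro sum.cong) auto
    also have "\<dots> = (\<Sum>j<2*n-1. (if i = 2*m-1 then h j else 0)) + (if i = 2*m-1 then 0 else g i)"
      by (subst Sn, subst sum.lessThan_Suc) (auto intro!: sum.cong)
    also have "\<dots> = (if i = 2*m-1 then real n + real (n-1) * s^2 else g i)"
      using hs by auto
    finally show ?thesis .
  qed
  have "(\<Sum>i<2*m. \<Sum>j<2*n. ((Q2_mat m n s - P_mat m n s) $$ (i,j))^2)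
      = (\<Sum>i<2*m. (if i = 2*m-1 then real n + real (n-1) * s^2 else g i))"
    using row by (intro sum.cong) auto
  also have "\<dots> = (\<Sum>i<2*m-1. g i) + (real n + real (n-1) * s^2)"
    by (subst Sm, subst sum.lessThan_Suc) (auto intro!: sum.cong)
  also have "\<dots> = real m + real n + s^2 * (real m + real n - 2)"
    unfolding gs using assms by (simp add: of_nat_diff algebra_simps)
  finally show ?thesis using J_simp[OF sv] by (simp add: P_mat_def)
qed

theorem mainTheorem6:
  fixes m n :: nat and s lam :: real
  assumes "m \<ge> 1" and "n \<ge> 1" and "m + n \<ge> 3" and "s > 1" and "lam > 0"
  shows "J_obj (P_mat m n s) lam (Q1_mat m n s) = 2 * real m * real n - 2 * lam
    \<and> J_obj (P_mat m n s) lam (Q2_mat m n s)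
        = real m + real n + s^2 * (real m + real n - 2) - 2 * lam
    \<and> (s < sqrt ((2 * real m * real n - real m - real n) / (real m + real n - 2)) \<longrightarrow>
        J_obj (P_mat m n s) lam (Q2_mat m n s) < J_obj (P_mat m n s) lam (Q1_mat m n s)
        \<and> \<not> (\<forall>Q. admissible (2*m) (2*n) Q \<longrightarrow>
               J_obj (P_mat m n s) lam (Q1_mat m n s) \<le> J_obj (P_mat m n s) lam Q))"
proof (intro conjI impI)
  note j1 = J1[OF assms(1,2,4), of lam] and j2 = J2[OF assms(1,2,4), of lam]
  show "J_obj (P_mat m n s) lam (Q1_mat m n s) = 2 * real m * real n - 2 * lam" by (rule j1)
  show "J_obj (P_mat m n s) lam (Q2_mat m n s) = real m + real n + s^2 * (real m + real n - 2) - 2 * lam" by (rule j2)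
  assume lt: "s < sqrt ((2 * real m * real n - real m - real n) / (real m + real n - 2))"
  have d: "real m + real n - 2 > 0" using assms(3) by linarith
  have "s^2 < (2 * real m * real n - real m - real n) / (real m + real n - 2)"
  proof (rule ccontr)
    assume "\<not> s^2 < (2 * real m * real n - real m - real n) / (real m + real n - 2)"
    hence "sqrt ((2 * real m * real n - real m - real n) / (real m + real n - 2)) \<le> sqrt (s^2)"
      by (intro real_sqrt_le_mono) simp
    thus False using lt assms(4) by simp
  qed
  hence "s^2 * (real m + real n - 2) < 2 * real m * real n - real m - real n"
    using d by (simp add: pos_less_divide_eq)
  thus lt2: "J_obj (P_mat m n s) lam (Q2_mat m n s) < J_obj (P_mat m n s) lam (Q1_mat m n s)"
    unfolding j1 j2 by (simp add: algebra_simps)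
  show "\<not> (\<forall>Q. admissible (2*m) (2*n) Q \<longrightarrow>
               J_obj (P_mat m n s) lam (Q1_mat m n s) \<le> J_obj (P_mat m n s) lam Q)"
    using Q2_adm[OF assms(1,2,4)] lt2 by force
qed

end
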